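(* Let $\alpha>0$, $t_0>0$, $x_0,v_0\in\mathcal H$, and let $x$ be a solution of the Cauchy problem $$\tfrac{\alpha}{t}\dot x(t)+\operatorname{proj}_{C(x(t))+\ddot x(t)}(0)=0\ (t>t_0),\qquad x(t_0)=x_0,\ \dot x(t_0)=v_0 .$$ Let $z\in\mathcal H$, $\lambda\ge0$ with $\alpha\ge\lambda+1$, and $\xi^*=\lambda(\alpha-1-\lambda)$. For $i=1,\dots,m$ define $$\mathcal E_{i,\lambda,\xi^*}(t)=t^2\big(f_i(x(t))-f_i(z)\big)+\tfrac12\|\lambda(x(t)-z)+t\dot x(t)\|^2+\tfrac{\xi^*}{2}\|x(t)-z\|^2 .$$ Then for all $i$ and almost all $t\in[t_0,+\infty)$, $$\tfrac{d}{dt}\mathcal E_{i,\lambda,\xi^*}(t)\le 2t\big(f_i(x(t))-f_i(z)\big)-t\lambda\min_{j=1,\dots,m}\big(f_j(x(t))-f_j(z)\big)+t(\lambda+1-\alpha)\|\dot x(t)\|^2 .$$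
   Context: $\mathcal H$ is a real Hilbert space. $f_1,\dots,f_m:\mathcal H\to\mathbb R$ are convex and continuously differentiable. $C(x)=\operatorname{co}\{\nabla f_i(x):i=1,\dots,m\}$. For a closed convex $K$, $\operatorname{proj}_K(y)=\arg\min_{w\in K}\|w-y\|^2$. A solution of the Cauchy problem is a function $x:[t_0,+\infty)\to\mathcal H$ such that: $x\in C^1([t_0,+\infty))$; $\dot x$ is absolutely continuous on $[t_0,T]$ for every $T\ge t_0$; there is a Bochner measurable $\ddot x$ with $\dot x(t)=\dot x(t_0)+\int_{t_0}^t\ddot x(s)\,ds$ for all $t$, and $\frac{d}{dt}\dot x=\ddot x$ a.e.; the equation holds for almost all $t\ge t_0$; and the initial conditions hold. *)

theory Defs
  imports "HOL-Analysis.Analysis"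
begin

definition proj :: "'a::real_inner set \<Rightarrow> 'a \<Rightarrow> 'a" where
  "proj K y = (THE w. w \<in> K \<and> (\<forall>u\<in>K. (norm (w - y))\<^sup>2 \<le> (norm (u - y))\<^sup>2))"

text \<open>C(x) = convex hull of the gradients of f_1, ..., f_m at x.\<close>
definition conv_grad :: "(nat \<Rightarrow> 'a::real_inner \<Rightarrow> 'a) \<Rightarrow> nat \<Rightarrow> 'a \<Rightarrow> 'a set" where
  "conv_grad grad m x = convex hull ((\<lambda>i. grad i x) ` {1..m})"

definition abs_cont_on :: "real \<Rightarrow> real \<Rightarrow> (real \<Rightarrow> 'b::real_normed_vector) \<Rightarrow> bool" where
  "abs_cont_on a b g \<longleftrightarrow>
     (\<forall>e>0. \<exists>d>0. \<forall>(n::nat) (u::nat \<Rightarrow> real) (v::nat \<Rightarrow> real).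
        (\<forall>k<n. a \<le> u k \<and> u k \<le> v k \<and> v k \<le> b) \<and>
        (\<forall>k<n. \<forall>l<n. k \<noteq> l \<longrightarrow> v k \<le> u l \<or> v l \<le> u k) \<and>
        (\<Sum>k<n. v k - u k) < d
        \<longrightarrow> (\<Sum>k<n. norm (g (v k) - g (u k))) < e)"

definition strongly_measurable :: "'m measure \<Rightarrow> ('m \<Rightarrow> 'b::real_normed_vector) \<Rightarrow> bool" where
  "strongly_measurable M g \<longleftrightarrow>
     (\<exists>s::nat \<Rightarrow> 'm \<Rightarrow> 'b. (\<forall>n. finite (s n ` space M) \<and> s n \<in> borel_measurable M) \<and>
        (AE y in M. (\<lambda>n. s n y) \<longlonglongrightarrow> g y))"

end

theory Submission
  imports Defs
begin

lemma grad_ineq: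
  fixes f :: "'a::real_inner \<Rightarrow> real"
  assumes cvx: "convex_on UNIV f" and d: "(f has_derivative (\<lambda>h. g \<bullet> h)) (at y)"
  shows "f z - f y \<ge> g \<bullet> (z - y)"
proof -
  define \<phi> where "\<phi> = (\<lambda>s::real. f (y + s *\<^sub>R (z - y)))"
  have c: "convex_on UNIV \<phi>"
  proof (rule convex_onI)
    fix t a b :: real assume "t > 0" "t < 1"
    have "y + ((1 - t) * a + t * b) *\<^sub>R (z - y) = (1 - t) *\<^sub>R (y + a *\<^sub>R (z - y)) + t *\<^sub>R (y + b *\<^sub>R (z - y))"
      by (simp add: algebra_simps)
    then show "\<phi> ((1 - t) *\<^sub>R a + t *\<^sub>R b) \<le> (1 - t) * \<phi> a + t * \<phi> b"
      unfolding \<phi>_def using convex_onD[OF cvx, of t] \<open>t > 0\<close> \<open>t < 1\<close> by simp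
  qed simp
  have "((\<lambda>s. y + s *\<^sub>R (z - y)) has_derivative (\<lambda>h. h *\<^sub>R (z - y))) (at 0)"
    by (auto intro!: derivative_eq_intros)
  moreover have "(f has_derivative (\<lambda>h. g \<bullet> h)) (at ((\<lambda>s. y + s *\<^sub>R (z - y)) 0))" using d by simp
  ultimately have "((\<lambda>s. f (y + s *\<^sub>R (z - y))) has_derivative (\<lambda>h. g \<bullet> (h *\<^sub>R (z - y)))) (at 0)"
    by (rule has_derivative_compose)
  then
  have "(\<phi> has_derivative (\<lambda>h. g \<bullet> (h *\<^sub>R (z - y)))) (at 0)"
    unfolding \<phi>_def by (simp add: o_def)
  then have "(\<phi> has_field_derivative (g \<bullet> (z - y))) (at 0 within UNIV)"
    unfolding has_field_derivative_def
    by (rule has_derivative_eq_rhs) (auto simp: fun_eq_iff)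
  from convex_on_imp_above_tangent[OF c _ _ _ this, of 1]
  have "\<phi> 1 - \<phi> 0 \<ge> g \<bullet> (z - y) * (1 - 0)" by simp
  then show ?thesis unfolding \<phi>_def by simp
qed

lemma vi:
  fixes K :: "'a::real_inner set"
  assumes "convex K" "w \<in> K" "\<forall>u\<in>K. (norm w)\<^sup>2 \<le> (norm u)\<^sup>2" "u \<in> K"
  shows "0 \<le> w \<bullet> (u - w)"
proof (rule ccontr)
  define d where "d = u - w"
  assume neg: "\<not> 0 \<le> w \<bullet> (u - w)"
  then have a: "w \<bullet> d < 0" by (simp add: d_def)
  then have "d \<noteq> 0" by auto
  then have nd: "(norm d)\<^sup>2 > 0" by simp
  define s where "s = min 1 (- (w \<bullet> d) / (norm d)\<^sup>2)"
  have "- (w \<bullet> d) / (norm d)\<^sup>2 > 0" using a nd by (intro divide_pos_pos) auto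
  then have s0: "s > 0" by (simp add: s_def)
  have s1: "s \<le> 1" by (simp add: s_def)
  have sd: "s * (norm d)\<^sup>2 \<le> - (w \<bullet> d)"
    using nd unfolding s_def
    by (metis min.cobounded2 mult.commute pos_le_divide_eq)
  have "w + s *\<^sub>R d = (1 - s) *\<^sub>R w + s *\<^sub>R u" by (simp add: d_def algebra_simps)
  also have "\<dots> \<in> K" using assms(1,2,4) s0 s1 by (simp add: convexD)
  finally have "(norm w)\<^sup>2 \<le> (norm (w + s *\<^sub>R d))\<^sup>2" using assms(3) by blast
  also have "\<dots> = (norm w)\<^sup>2 + 2 * s * (w \<bullet> d) + s * (s * (norm d)\<^sup>2)"
    unfolding power2_norm_eq_inner by (simp add: inner_add_left inner_add_right inner_commute[of d w] algebra_simps)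
  finally have "0 \<le> s * (2 * (w \<bullet> d) + s * (norm d)\<^sup>2)" by (simp add: algebra_simps)
  then have "0 \<le> 2 * (w \<bullet> d) + s * (norm d)\<^sup>2" using s0 by (simp add: zero_le_mult_iff)
  with sd a show False by linarith
qed

lemma proj_char:
  fixes K :: "'a::real_inner set"
  assumes "convex K" "compact K" "K \<noteq> {}"
  shows "proj K 0 \<in> K \<and> (\<forall>u\<in>K. 0 \<le> proj K 0 \<bullet> (u - proj K 0))"
proof -
  have "continuous_on K (\<lambda>u. (norm u)\<^sup>2)" by (intro continuous_intros)
  from continuous_attains_inf[OF assms(2,3) this]
  obtain w where w: "w \<in> K" "\<forall>u\<in>K. (norm w)\<^sup>2 \<le> (norm u)\<^sup>2" by blast
  have "proj K 0 = w"
    unfolding proj_def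
  proof (rule the_equality)
    show "w \<in> K \<and> (\<forall>u\<in>K. (norm (w - 0))\<^sup>2 \<le> (norm (u - 0))\<^sup>2)" using w by simp
  next
    fix w' assume h: "w' \<in> K \<and> (\<forall>u\<in>K. (norm (w' - 0))\<^sup>2 \<le> (norm (u - 0))\<^sup>2)"
    have 1: "0 \<le> w' \<bullet> (w - w')" using vi[OF assms(1), of w' w] h w by simp
    have 2: "0 \<le> w \<bullet> (w' - w)" using vi[OF assms(1) w, of w'] h by simp
    have "(norm (w' - w))\<^sup>2 = - (w' \<bullet> (w - w')) - w \<bullet> (w' - w)"
      by (simp add: power2_norm_eq_inner inner_diff inner_commute)
    with 1 2 have "(norm (w' - w))\<^sup>2 \<le> 0" by linarith
    then show "w' = w" by simp
  qed
  then show ?thesis using vi[OF assms(1) w] w by auto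
qed

theorem lemma4p11:
  fixes f :: "nat \<Rightarrow> 'a::{real_inner, complete_space} \<Rightarrow> real"
    and grad :: "nat \<Rightarrow> 'a \<Rightarrow> 'a"
    and m :: nat
    and x x' x'' :: "real \<Rightarrow> 'a"
    and \<alpha> t0 lam :: real
    and x0 v0 z :: 'a
  assumes m: "m \<ge> 1"
    and f_convex: "\<forall>i\<in>{1..m}. convex_on UNIV (f i)"
    and f_grad: "\<forall>i\<in>{1..m}. \<forall>y. (f i has_derivative (\<lambda>h. grad i y \<bullet> h)) (at y)"
    and grad_cont: "\<forall>i\<in>{1..m}. continuous_on UNIV (grad i)"
    and \<alpha>: "\<alpha> > 0" and t0: "t0 > 0"
    \<comment> \<open>x is C^1 on [t0,+\<infinity>) with derivative x'\<close>
    and x_deriv: "\<forall>t\<ge>t0. (x has_vector_derivative x' t) (at t within {t0..})"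
    and x'_cont: "continuous_on {t0..} x'"
    \<comment> \<open>x' absolutely continuous on every [t0,T]\<close>
    and x'_ac: "\<forall>T\<ge>t0. abs_cont_on t0 T x'"
    \<comment> \<open>x'' Bochner measurable and x'(t) = x'(t0) + integral of x'' over [t0,t]\<close>
    and x''_meas: "strongly_measurable (restrict_space lborel {t0..}) x''"
    and x''_int: "\<forall>t\<ge>t0. (\<lambda>s. norm (x'' s)) integrable_on {t0..t}
                       \<and> (x'' has_integral (x' t - x' t0)) {t0..t}"
    and x''_deriv: "AE t in lborel. t > t0 \<longrightarrow> (x' has_vector_derivative x'' t) (at t)"
    \<comment> \<open>the equation, for almost all t > t0\<close>
    and eq: "AE t in lborel. t > t0 \<longrightarrow>
               (\<alpha> / t) *\<^sub>R x' t + proj ((\<lambda>c. c + x'' t) ` conv_grad grad m (x t)) 0 = 0"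
    and init: "x t0 = x0" "x' t0 = v0"
    and lam: "lam \<ge> 0" and \<alpha>_lam: "\<alpha> \<ge> lam + 1"
  shows "\<forall>i\<in>{1..m}. AE t in lborel. t \<ge> t0 \<longrightarrow>
           (\<exists>D. ((\<lambda>s. s\<^sup>2 * (f i (x s) - f i z)
                      + 1/2 * (norm (lam *\<^sub>R (x s - z) + s *\<^sub>R x' s))\<^sup>2
                      + (lam * (\<alpha> - 1 - lam)) / 2 * (norm (x s - z))\<^sup>2)
                  has_real_derivative D) (at t within {t0..})
              \<and> D \<le> 2 * t * (f i (x t) - f i z)
                     - t * lam * Min ((\<lambda>j. f j (x t) - f j z) ` {1..m})
                     + t * (lam + 1 - \<alpha>) * (norm (x' t))\<^sup>2)"
  proof
  fix i assume i: "i \<in> {1..m}"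
  have fin: "finite ((\<lambda>j. grad j (x t)) ` {1..m})" for t by simp
  have AE0: "AE t in lborel. t \<noteq> t0" by (rule AE_lborel_singleton)
  show "AE t in lborel. t \<ge> t0 \<longrightarrow>
           (\<exists>D. ((\<lambda>s. s\<^sup>2 * (f i (x s) - f i z)
                      + 1/2 * (norm (lam *\<^sub>R (x s - z) + s *\<^sub>R x' s))\<^sup>2
                      + (lam * (\<alpha> - 1 - lam)) / 2 * (norm (x s - z))\<^sup>2)
                  has_real_derivative D) (at t within {t0..})
              \<and> D \<le> 2 * t * (f i (x t) - f i z)
                     - t * lam * Min ((\<lambda>j. f j (x t) - f j z) ` {1..m})
                     + t * (lam + 1 - \<alpha>) * (norm (x' t))\<^sup>2)"
    using AE0 x''_deriv eq
  proof eventually_elim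
    case (elim t)
    show ?case
    proof
      assume "t \<ge> t0"
      with elim have tt0: "t > t0" by auto
      with t0 have tpos: "t > 0" by simp
      have dA: "(x' has_vector_derivative x'' t) (at t)" using elim tt0 by auto
      have eqt: "(\<alpha> / t) *\<^sub>R x' t + proj ((\<lambda>c. c + x'' t) ` conv_grad grad m (x t)) 0 = 0"
        using elim tt0 by auto
      define V where "V = x' t"
      define A where "A = x'' t"
      define X where "X = x t - z"
      define S where "S = conv_grad grad m (x t)"
      define K where "K = (\<lambda>c. c + A) ` S"
      have KS: "K = (+) A ` S" unfolding K_def by (auto simp: add.commute)
      have Sc: "convex S" "compact S" unfolding S_def conv_grad_def
        by (auto intro!: finite_imp_compact_convex_hull)
      have gS: "grad j (x t) \<in> S" if "j \<in> {1..m}" for j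
        unfolding S_def conv_grad_def using that by (intro hull_inc) auto
      have "S \<noteq> {}" using gS[of 1] m by auto
      have Kc: "convex K" "compact K" "K \<noteq> {}"
        unfolding KS using Sc \<open>S \<noteq> {}\<close> by (auto intro: convex_translation compact_translation)
      define p where "p = proj K 0"
      from proj_char[OF Kc] have pK: "p \<in> K" and pvi: "\<forall>u\<in>K. 0 \<le> p \<bullet> (u - p)"
        unfolding p_def by auto
      have pV: "p = - (\<alpha> / t) *\<^sub>R V" using eqt unfolding p_def K_def S_def A_def V_def
        by (simp add: eq_neg_iff_add_eq_0 add.commute)
      from pK obtain c where cS: "c \<in> S" and pc: "p = c + A" unfolding K_def by auto
      have "0 \<le> p \<bullet> ((grad i (x t) + A) - p)" using pvi gS[OF i] unfolding K_def by auto
      moreover have "(grad i (x t) + A) - p = grad i (x t) - c" using pc by simp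
      ultimately have "0 \<le> p \<bullet> (grad i (x t) - c)" by simp
      then have "0 \<le> - (\<alpha> / t) * (V \<bullet> (grad i (x t) - c))"
        by (simp only: pV inner_scaleR_left)
      moreover have "\<alpha> / t > 0" using \<alpha> tpos by simp
      ultimately have P1: "V \<bullet> (grad i (x t) - c) \<le> 0"
      proof -
        assume h1: "0 \<le> - (\<alpha> / t) * (V \<bullet> (grad i (x t) - c))" and h2: "\<alpha> / t > 0"
        show ?thesis
        proof (rule ccontr)
          assume "\<not> ?thesis"
          then have "(\<alpha> / t) * (V \<bullet> (grad i (x t) - c)) > 0" using h2 by (intro mult_pos_pos) auto
          with h1 show False by linarith
        qed
      qed
      define M where "M = Min ((\<lambda>j. f j (x t) - f j z) ` {1..m})"
      have "grad j (x t) \<in> {y. X \<bullet> y \<ge> M}" if j: "j \<in> {1..m}" for j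
      proof -
        have "M \<le> f j (x t) - f j z" unfolding M_def using j by (intro Min_le) auto
        also have "\<dots> \<le> grad j (x t) \<bullet> (x t - z)"
          using grad_ineq[of "f j" "grad j (x t)" "x t" z] f_convex f_grad j
          by (simp add: inner_diff_right)
        finally show ?thesis by (simp add: X_def inner_commute)
      qed
      then have "S \<subseteq> {y. X \<bullet> y \<ge> M}" unfolding S_def conv_grad_def
        by (intro hull_minimal convex_halfspace_ge) auto
      with cS have P2: "X \<bullet> c \<ge> M" by auto
      have tint: "t \<in> interior {t0..}" using tt0 by simp
      have "(x has_vector_derivative V) (at t within {t0..})" using x_deriv tt0 V_def by simp
      then have "(x has_vector_derivative V) (at t)" by (simp add: at_within_interior[OF tint])
      then have hx: "(x has_derivative (\<lambda>h. h *\<^sub>R V)) (at t)"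
        by (simp add: has_vector_derivative_def)
      have hx': "(x' has_derivative (\<lambda>h. h *\<^sub>R A)) (at t)"
        using dA by (simp add: A_def has_vector_derivative_def)
      have hf: "((\<lambda>s. f i (x s)) has_derivative (\<lambda>h. grad i (x t) \<bullet> (h *\<^sub>R V))) (at t)"
      proof -
        have "(f i has_derivative (\<lambda>h. grad i (x t) \<bullet> h)) (at (x t))" using f_grad i by blast
        from has_derivative_compose[OF hx this] show ?thesis .
      qed
      define D where "D = 2 * t * (f i (x t) - f i z) + t\<^sup>2 * (grad i (x t) \<bullet> V)
         + (lam *\<^sub>R X + t *\<^sub>R V) \<bullet> ((lam + 1) *\<^sub>R V + t *\<^sub>R A) + (lam * (\<alpha> - 1 - lam)) * (X \<bullet> V)"
      have hE: "((\<lambda>s. s\<^sup>2 * (f i (x s) - f i z)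
                      + 1/2 * ((lam *\<^sub>R (x s - z) + s *\<^sub>R x' s) \<bullet> (lam *\<^sub>R (x s - z) + s *\<^sub>R x' s))
                      + (lam * (\<alpha> - 1 - lam)) / 2 * ((x s - z) \<bullet> (x s - z)))
                  has_derivative (\<lambda>h. h * D)) (at t)"
        apply (rule has_derivative_eq_rhs)
         apply (rule derivative_eq_intros hx hx' hf | simp)+
        apply (rule ext)
        unfolding D_def X_def V_def
        apply (simp add: inner_add_left inner_add_right inner_diff_left inner_diff_right inner_commute algebra_simps)
        apply (simp add: field_simps)
        done
      show "\<exists>D. ((\<lambda>s. s\<^sup>2 * (f i (x s) - f i z)
                      + 1/2 * (norm (lam *\<^sub>R (x s - z) + s *\<^sub>R x' s))\<^sup>2
                      + (lam * (\<alpha> - 1 - lam)) / 2 * (norm (x s - z))\<^sup>2)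
                  has_real_derivative D) (at t within {t0..})
              \<and> D \<le> 2 * t * (f i (x t) - f i z)
                     - t * lam * Min ((\<lambda>j. f j (x t) - f j z) ` {1..m})
                     + t * (lam + 1 - \<alpha>) * (norm (x' t))\<^sup>2"
      proof (intro exI conjI)
        have "((\<lambda>s. s\<^sup>2 * (f i (x s) - f i z)
                      + 1/2 * ((lam *\<^sub>R (x s - z) + s *\<^sub>R x' s) \<bullet> (lam *\<^sub>R (x s - z) + s *\<^sub>R x' s))
                      + (lam * (\<alpha> - 1 - lam)) / 2 * ((x s - z) \<bullet> (x s - z)))
                  has_real_derivative D) (at t)"
        proof -
          have eqf: "(*) D = (\<lambda>h. h * D)" by (rule ext) (simp add: mult.commute)
          show ?thesis unfolding has_field_derivative_def eqf by (rule hE)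
        qed
        then show "((\<lambda>s. s\<^sup>2 * (f i (x s) - f i z)
                      + 1/2 * (norm (lam *\<^sub>R (x s - z) + s *\<^sub>R x' s))\<^sup>2
                      + (lam * (\<alpha> - 1 - lam)) / 2 * (norm (x s - z))\<^sup>2)
                  has_real_derivative D) (at t within {t0..})"
          unfolding power2_norm_eq_inner by (rule has_field_derivative_at_within)
      next
        have "A = - (\<alpha> / t) *\<^sub>R V - c" using pc pV by (simp add: algebra_simps)
        then have tA: "t *\<^sub>R A = - \<alpha> *\<^sub>R V - t *\<^sub>R c" using tpos
          by (simp add: scaleR_diff_right)
        have hY: "(lam + 1) *\<^sub>R V + t *\<^sub>R A = (lam + 1 - \<alpha>) *\<^sub>R V - t *\<^sub>R c"
          using tA by (simp add: algebra_simps)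
        have Deq: "D = 2 * t * (f i (x t) - f i z) + t\<^sup>2 * (V \<bullet> (grad i (x t) - c))
             + t * (lam + 1 - \<alpha>) * (V \<bullet> V) - t * lam * (X \<bullet> c)"
          unfolding D_def hY
          by (simp add: inner_add_left inner_add_right inner_diff_left inner_diff_right inner_commute algebra_simps power2_eq_square)
        have "t * lam * M \<le> t * lam * (X \<bullet> c)" using P2 tpos lam by (intro mult_left_mono) auto
        moreover have "t\<^sup>2 * (V \<bullet> (grad i (x t) - c)) \<le> 0" using P1 by (intro mult_nonneg_nonpos) auto
        ultimately show "D \<le> 2 * t * (f i (x t) - f i z)
                     - t * lam * Min ((\<lambda>j. f j (x t) - f j z) ` {1..m})
                     + t * (lam + 1 - \<alpha>) * (norm (x' t))\<^sup>2"
          unfolding Deq M_def[symmetric] V_def[symmetric] power2_norm_eq_inner by linarith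
      qed
    qed
  qed
qed

end
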